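(* Let $x$ be a shallow feasible solution to the integer quadratic program (minimize $x^TQx$ subject to $Ax\le b$, $Cx=d$, $x\in\mathbb{Z}^n$). Then there exist a row $a_j^T$ of $A$ and an integer $b_j'$ such that $a_j^Tx=b_j'$ and $b_j'\in\{b_j-\alpha\cdot n\cdot\Delta^2,\ldots,b_j\}$. Further, $a_j^T$ is linearly independent from the rows of $C$.
   Context: Setting: $Q$ is an $n\times n$ integer symmetric matrix, $A$ an $m\times n$ integer matrix with rows $a_1^T,\dots,a_m^T$, $b\in\mathbb{Z}^m$ with entries $b_j$, $C$ an integer matrix with $n$ columns and linearly independent rows, and $d$ an integer vector. $\alpha$ is the maximum absolute value of an entry of $Q$ and $A$, and $\Delta$ is the maximum absolute value of the determinant of a square submatrix of $C$. $y_1,\dots,y_r$ is a basis of the nullspace of $C$ consisting of integer vectors with $|y_i|_\infty\le\Delta^2$ for all $i$, and $Y$ is the set of these vectors. A feasible solution is an $x\in\mathbb{Z}^n$ with $Ax\le b$ and $Cx=d$. A feasible solution $x$ is deep if $x+y_i$ and $x-y_i$ are feasible solutions for all $y_i\in Y$, and shallow otherwise. *)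

theory Defs
  imports "Jordan_Normal_Form.Determinant" "Jordan_Normal_Form.DL_Submatrix"
begin

definition max_abs_entry :: "int mat \<Rightarrow> int" where
  "max_abs_entry M = Max (insert 0 {\<bar>M $$ (i,j)\<bar> | i j. i < dim_row M \<and> j < dim_col M})"

definition alpha :: "int mat \<Rightarrow> int mat \<Rightarrow> int" where
  "alpha Q A = max (max_abs_entry Q) (max_abs_entry A)"

definition Delta :: "int mat \<Rightarrow> int" where
  "Delta C = Max {\<bar>det (submatrix C I J)\<bar> | I J.
       I \<subseteq> {..<dim_row C} \<and> J \<subseteq> {..<dim_col C} \<and> card I = card J}"

definition lin_indep_vecs :: "nat \<Rightarrow> int vec list \<Rightarrow> bool" where
  "lin_indep_vecs n vs \<longleftrightarrow>
     (\<forall>c :: nat \<Rightarrow> rat. (\<forall>k<n. (\<Sum>i<length vs. c i * of_int (vs ! i $ k)) = 0)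
        \<longrightarrow> (\<forall>i<length vs. c i = 0))"

definition nullspace_basis :: "int mat \<Rightarrow> int vec set \<Rightarrow> bool" where
  "nullspace_basis C Y \<longleftrightarrow>
     finite Y \<and> Y \<subseteq> carrier_vec (dim_col C) \<and>
     (\<forall>y\<in>Y. mult_mat_vec C y = 0\<^sub>v (dim_row C)) \<and>
     (\<forall>c :: int vec \<Rightarrow> rat. (\<forall>k<dim_col C. (\<Sum>y\<in>Y. c y * of_int (y $ k)) = 0)
        \<longrightarrow> (\<forall>y\<in>Y. c y = 0)) \<and>
     (\<forall>z :: nat \<Rightarrow> rat.
        (\<forall>i<dim_row C. (\<Sum>k<dim_col C. of_int (C $$ (i,k)) * z k) = 0)
        \<longrightarrow> (\<exists>c :: int vec \<Rightarrow> rat. \<forall>k<dim_col C. z k = (\<Sum>y\<in>Y. c y * of_int (y $ k))))"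

definition feasible :: "int mat \<Rightarrow> int vec \<Rightarrow> int mat \<Rightarrow> int vec \<Rightarrow> int vec \<Rightarrow> bool" where
  "feasible A b C d x \<longleftrightarrow> x \<in> carrier_vec (dim_col A) \<and>
     (\<forall>j<dim_row A. row A j \<bullet> x \<le> b $ j) \<and> mult_mat_vec C x = d"

definition deep :: "int mat \<Rightarrow> int vec \<Rightarrow> int mat \<Rightarrow> int vec \<Rightarrow> int vec set \<Rightarrow> int vec \<Rightarrow> bool" where
  "deep A b C d Y x \<longleftrightarrow> feasible A b C d x \<and>
     (\<forall>y\<in>Y. feasible A b C d (x + y) \<and> feasible A b C d (x - y))"

definition shallow :: "int mat \<Rightarrow> int vec \<Rightarrow> int mat \<Rightarrow> int vec \<Rightarrow> int vec set \<Rightarrow> int vec \<Rightarrow> bool" where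
  "shallow A b C d Y x \<longleftrightarrow> feasible A b C d x \<and> \<not> deep A b C d Y x"

end

theory Submission
  imports Defs
begin

lemma entry_le_alpha:
  assumes "A \<in> carrier_mat m n" "j < m" "k < n"
  shows "\<bar>A $$ (j,k)\<bar> \<le> alpha Q A"
proof -
  have fin: "finite {\<bar>A $$ (i,j)\<bar> | i j. i < dim_row A \<and> j < dim_col A}"
  proof -
    have "{\<bar>A $$ (i,j)\<bar> | i j. i < dim_row A \<and> j < dim_col A}
          \<subseteq> (\<lambda>(i,j). \<bar>A $$ (i,j)\<bar>) ` ({..<dim_row A} \<times> {..<dim_col A})" by auto
    thus ?thesis by (rule finite_subset) auto
  qed
  have "\<bar>A $$ (j,k)\<bar> \<le> max_abs_entry A"
    unfolding max_abs_entry_def using fin assms by (intro Max_ge) auto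
  thus ?thesis unfolding alpha_def by linarith
qed

lemma core:
  fixes A C :: "int mat" and b x w :: "int vec" and n m :: nat
  assumes A: "A \<in> carrier_mat m n" and Cn: "dim_col C = n"
    and x: "x \<in> carrier_vec n" and w: "w \<in> carrier_vec n"
    and Cw: "C *\<^sub>v w = 0\<^sub>v (dim_row C)"
    and wb: "\<forall>k<n. \<bar>w $ k\<bar> \<le> D"
    and ind: "lin_indep_vecs n (rows C)"
    and j: "j < m" and le: "row A j \<bullet> x \<le> b $ j" and gt: "row A j \<bullet> (x + w) > b $ j"
  shows "row A j \<bullet> x \<in> {b $ j - alpha Q A * int n * D .. b $ j} \<and>
           lin_indep_vecs n (rows C @ [row A j])"
proof -
  have rj: "row A j \<in> carrier_vec n" using A j by auto
  have split: "row A j \<bullet> (x + w) = row A j \<bullet> x + row A j \<bullet> w"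
    using rj x w by (simp add: scalar_prod_add_distrib)
  have ne: "row A j \<bullet> w \<noteq> 0" using le gt split by linarith
  have sw: "row A j \<bullet> w = (\<Sum>k<n. A $$ (j,k) * w $ k)"
    using w A j by (simp add: scalar_prod_def lessThan_atLeast0)
  have "\<bar>row A j \<bullet> w\<bar> \<le> (\<Sum>k<n. \<bar>A $$ (j,k) * w $ k\<bar>)" unfolding sw by (rule sum_abs)
  also have "\<dots> \<le> (\<Sum>k<n. alpha Q A * D)"
  proof (rule sum_mono)
    fix k assume "k \<in> {..<n}"
    then have k: "k < n" by auto
    have a: "\<bar>A $$ (j,k)\<bar> \<le> alpha Q A" using entry_le_alpha[OF A j k] .
    have b: "\<bar>w $ k\<bar> \<le> D" using wb k by auto
    show "\<bar>A $$ (j,k) * w $ k\<bar> \<le> alpha Q A * D"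
      unfolding abs_mult using a b by (intro mult_mono) auto
  qed
  also have "\<dots> = alpha Q A * int n * D" by simp
  finally have bnd: "\<bar>row A j \<bullet> w\<bar> \<le> alpha Q A * int n * D" .
  have part1: "row A j \<bullet> x \<in> {b $ j - alpha Q A * int n * D .. b $ j}"
    using le gt split bnd by auto
  have Crow: "\<And>i. i < dim_row C \<Longrightarrow> (\<Sum>k<n. C $$ (i,k) * w $ k) = 0"
  proof -
    fix i assume i: "i < dim_row C"
    have "(C *\<^sub>v w) $ i = 0" using Cw i by simp
    thus "(\<Sum>k<n. C $$ (i,k) * w $ k) = 0"
      using i w Cn by (simp add: mult_mat_vec_def scalar_prod_def lessThan_atLeast0)
  qed
  have part2: "lin_indep_vecs n (rows C @ [row A j])"
    unfolding lin_indep_vecs_def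
  proof (intro allI impI)
    fix c :: "nat \<Rightarrow> rat" and i
    let ?r = "dim_row C"
    assume h: "\<forall>k<n. (\<Sum>i<length (rows C @ [row A j]). c i * of_int ((rows C @ [row A j]) ! i $ k)) = 0"
      and i: "i < length (rows C @ [row A j])"
    have h2: "\<forall>k<n. (\<Sum>i<?r. c i * of_int (C $$ (i,k))) + c ?r * of_int (A $$ (j,k)) = 0"
    proof (intro allI impI)
      fix k assume k: "k < n"
      have "(\<Sum>i<Suc ?r. c i * of_int ((rows C @ [row A j]) ! i $ k)) = 0"
        using h k by simp
      moreover have "(\<Sum>i<?r. c i * of_int ((rows C @ [row A j]) ! i $ k)) = (\<Sum>i<?r. c i * of_int (C $$ (i,k)))"
        by (rule sum.cong) (use k Cn in \<open>auto simp: nth_append\<close>)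
      moreover have "(rows C @ [row A j]) ! ?r $ k = A $$ (j,k)" using k A j by (simp add: nth_append)
      ultimately show "(\<Sum>i<?r. c i * of_int (C $$ (i,k))) + c ?r * of_int (A $$ (j,k)) = 0"
        by simp
    qed
    have "0 = (\<Sum>k<n. ((\<Sum>i<?r. c i * of_int (C $$ (i,k))) + c ?r * of_int (A $$ (j,k))) * of_int (w $ k))"
      using h2 by simp
    also have "\<dots> = (\<Sum>i<?r. c i * of_int (\<Sum>k<n. C $$ (i,k) * w $ k)) + c ?r * of_int (\<Sum>k<n. A $$ (j,k) * w $ k)"
      by (simp add: distrib_right sum.distrib sum_distrib_left sum_distrib_right
            sum.swap[of _ "{..<n}"] mult.assoc)
    also have "\<dots> = c ?r * of_int (row A j \<bullet> w)" using Crow sw by simp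
    finally have "c ?r = 0" using ne by simp
    hence h3: "\<forall>k<n. (\<Sum>i<length (rows C). c i * of_int (rows C ! i $ k)) = 0"
      using h2 Cn by simp
    have rest: "\<forall>i<length (rows C). c i = 0" using ind h3 unfolding lin_indep_vecs_def by blast
    show "c i = 0"
    proof (cases "i < ?r")
      case True thus ?thesis using rest by simp
    next
      case False hence "i = ?r" using i by simp
      thus ?thesis using \<open>c ?r = 0\<close> by simp
    qed
  qed
  show ?thesis using part1 part2 by simp
qed

theorem lemma2:
  fixes Q A C :: "int mat" and b d x :: "int vec" and Y :: "int vec set" and n m :: nat
  assumes "Q \<in> carrier_mat n n" and "Q = transpose_mat Q"
    and "A \<in> carrier_mat m n" and "b \<in> carrier_vec m"
    and "dim_col C = n" and "d \<in> carrier_vec (dim_row C)"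
    and "lin_indep_vecs n (rows C)"
    and "nullspace_basis C Y"
    and "\<forall>y\<in>Y. \<forall>k<n. \<bar>y $ k\<bar> \<le> (Delta C)\<^sup>2"
    and "shallow A b C d Y x"
  shows "\<exists>j<m. \<exists>b' :: int. row A j \<bullet> x = b' \<and>
           b' \<in> {b $ j - alpha Q A * int n * (Delta C)\<^sup>2 .. b $ j} \<and>
           lin_indep_vecs n (rows C @ [row A j])"
proof -
  note A = assms(3)
  have fx: "feasible A b C d x" and nd: "\<not> deep A b C d Y x" using assms(10) unfolding shallow_def by auto
  have x: "x \<in> carrier_vec n" and xle: "\<forall>j<m. row A j \<bullet> x \<le> b $ j" and Cx: "C *\<^sub>v x = d"
    using fx A unfolding feasible_def by auto
  obtain y where yY: "y \<in> Y" and nf: "\<not> (feasible A b C d (x + y) \<and> feasible A b C d (x - y))"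
    using nd fx unfolding deep_def by auto
  have y: "y \<in> carrier_vec n" and Cy: "C *\<^sub>v y = 0\<^sub>v (dim_row C)"
    using yY assms(8,5) unfolding nullspace_basis_def by auto
  obtain w where w: "w \<in> carrier_vec n" and Cw: "C *\<^sub>v w = 0\<^sub>v (dim_row C)"
    and wb: "\<forall>k<n. \<bar>w $ k\<bar> \<le> (Delta C)\<^sup>2" and nfw: "\<not> feasible A b C d (x + w)"
  proof (cases "feasible A b C d (x + y)")
    case False
    show ?thesis by (rule that[OF y Cy _ False]) (use assms(9) yY in auto)
  next
    case True
    hence F: "\<not> feasible A b C d (x - y)" using nf by simp
    have e: "x - y = x + (- y)" using x y by auto
    have "C *\<^sub>v (- y) = 0\<^sub>v (dim_row C)"
    proof -
      show ?thesis
      proof (rule eq_vecI)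
        fix i assume "i < dim_vec (0\<^sub>v (dim_row C) :: int vec)"
        hence i: "i < dim_row C" by simp
        have "(C *\<^sub>v y) $ i = 0" using Cy i by simp
        hence "row C i \<bullet> y = 0" using i by simp
        moreover have "row C i \<bullet> (- y) = - (row C i \<bullet> y)"
          using y assms(5) by (simp add: scalar_prod_uminus_right)
        ultimately show "(C *\<^sub>v (- y)) $ i = 0\<^sub>v (dim_row C) $ i" using i by simp
      qed simp
    qed
    moreover have "\<forall>k<n. \<bar>(- y) $ k\<bar> \<le> (Delta C)\<^sup>2" using assms(9) yY y by auto
    ultimately show ?thesis using that[of "- y"] F e y by auto
  qed
  have Cxw: "C *\<^sub>v (x + w) = d"
  proof -
    have "C *\<^sub>v (x + w) = C *\<^sub>v x + C *\<^sub>v w"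
      using x w assms(5) by (metis carrier_mat_triv mult_add_distrib_mat_vec)
    thus ?thesis using Cx Cw assms(6) by auto
  qed
  have "x + w \<in> carrier_vec (dim_col A)" using x w A by auto
  then obtain j where j: "j < m" and gt: "\<not> row A j \<bullet> (x + w) \<le> b $ j"
    using nfw Cxw A unfolding feasible_def by auto
  have "row A j \<bullet> x \<in> {b $ j - alpha Q A * int n * (Delta C)\<^sup>2 .. b $ j} \<and>
           lin_indep_vecs n (rows C @ [row A j])"
    by (rule core[OF A assms(5) x w Cw wb assms(7) j]) (use xle j gt in auto)
  thus ?thesis using j by blast
qed

end
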